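(* For every relational structure $\mathfrak{C}$ in which every relation symbol has arity at most $m$ (for some $m\in\mathbb N$) there exists a relational structure $\mathfrak{B}$ in which every relation symbol has arity at most $2$ such that $\mathfrak{B}$ and $\mathfrak{C}$ are primitively positively bi-interpretable. If the signature of $\mathfrak{C}$ is finite, then $\mathfrak{B}$ can be chosen to have a finite signature as well.
   Context: A primitive positive formula is an existentially quantified conjunction of atomic formulas (relational atoms, equalities, $\top$, $\bot$). A primitive positive (pp-) interpretation $I$ of a $\sigma$-structure $\mathfrak{B}$ in a $\tau$-structure $\mathfrak{A}$ of dimension $d$ consists of a pp $\tau$-formula $\delta_I(x_1,\dots,x_d)$, a pp $\tau$-formula $\phi_I$ for each atomic $\sigma$-formula $\phi$ (including equality), and a surjective coordinate map $h_I\colon D_I\to B$ with $D_I=\delta_I(\mathfrak{A})\subseteq A^d$ such that $\mathfrak{B}\models\phi(h_I(\bar a_1),\dots,h_I(\bar a_k))$ iff $\mathfrak{A}\models\phi_I(\bar a_1,\dots,\bar a_k)$ for all $\bar a_i\in D_I$. If $I_1$ is a $d_1$-dimensional pp-interpretation of $\mathfrak{C}_1$ in $\mathfrak{C}_2$ and $I_2$ a $d_2$-dimensional pp-interpretation of $\mathfrak{C}_2$ in $\mathfrak{C}_3$, the composition $I_1\circ I_2$ is the $d_1d_2$-dimensional pp-interpretation of $\mathfrak{C}_1$ in $\mathfrak{C}_3$ (with formulas obtained by replacing atomic $\tau_2$-formulas in the formulas of $I_1$ by their $I_2$-translations) whose coordinate map sends $(a^1_1,\dots,a^1_{d_2},\dots,a^{d_1}_1,\dots,a^{d_1}_{d_2})$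 to $h_{I_1}(h_{I_2}(a^1_1,\dots,a^1_{d_2}),\dots,h_{I_2}(a^{d_1}_1,\dots,a^{d_1}_{d_2}))$. Two pp-interpretations $I_1,I_2$ of $\mathfrak{B}$ in $\mathfrak{A}$ are homotopic if the relation $\{(\bar x,\bar y)\mid h_{I_1}(\bar x)=h_{I_2}(\bar y)\}$ is pp-definable in $\mathfrak{A}$. The identity interpretation of $\mathfrak{C}$ in $\mathfrak{C}$ is the 1-dimensional one with identity coordinate map. $\mathfrak{A}$ and $\mathfrak{B}$ are primitively positively bi-interpretable if there are pp-interpretations $I$ of $\mathfrak{B}$ in $\mathfrak{A}$ and $J$ of $\mathfrak{A}$ in $\mathfrak{B}$ such that $I\circ J$ and $J\circ I$ are homotopic to the respective identity interpretations. *)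

theory Defs
  imports Main
begin

record ('a, 's) rstruct =
  univ :: "'a set"
  sig  :: "'s set"
  ar   :: "'s \<Rightarrow> nat"
  rel  :: "'s \<Rightarrow> 'a list set"

definition wf_struct :: "('a, 's) rstruct \<Rightarrow> bool" where
  "wf_struct A \<longleftrightarrow> (\<forall>s \<in> sig A. \<forall>t \<in> rel A s. length t = ar A s \<and> set t \<subseteq> univ A)"

definition arity_bounded :: "nat \<Rightarrow> ('a, 's) rstruct \<Rightarrow> bool" where
  "arity_bounded m A \<longleftrightarrow> (\<forall>s \<in> sig A. ar A s \<le> m)"

datatype 's ppf =
    PTop
  | PBot
  | PEq nat nat
  | PRel 's "nat list"
  | PConj "'s ppf" "'s ppf"
  | PEx nat "'s ppf"

fun fv :: "'s ppf \<Rightarrow> nat set" where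
  "fv PTop = {}"
| "fv PBot = {}"
| "fv (PEq i j) = {i, j}"
| "fv (PRel s xs) = set xs"
| "fv (PConj p q) = fv p \<union> fv q"
| "fv (PEx n p) = fv p - {n}"

fun wf_ppf :: "('a, 's) rstruct \<Rightarrow> 's ppf \<Rightarrow> bool" where
  "wf_ppf A (PRel s xs) \<longleftrightarrow> s \<in> sig A \<and> length xs = ar A s"
| "wf_ppf A (PConj p q) \<longleftrightarrow> wf_ppf A p \<and> wf_ppf A q"
| "wf_ppf A (PEx n p) \<longleftrightarrow> wf_ppf A p"
| "wf_ppf A _ \<longleftrightarrow> True"

fun sat :: "('a, 's) rstruct \<Rightarrow> 's ppf \<Rightarrow> (nat \<Rightarrow> 'a) \<Rightarrow> bool" where
  "sat A PTop v \<longleftrightarrow> True"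
| "sat A PBot v \<longleftrightarrow> False"
| "sat A (PEq i j) v \<longleftrightarrow> v i = v j"
| "sat A (PRel s xs) v \<longleftrightarrow> map v xs \<in> rel A s"
| "sat A (PConj p q) v \<longleftrightarrow> sat A p v \<and> sat A q v"
| "sat A (PEx n p) v \<longleftrightarrow> (\<exists>a \<in> univ A. sat A p (v(n := a)))"

definition pp_definable :: "('a, 's) rstruct \<Rightarrow> nat \<Rightarrow> 'a list set \<Rightarrow> bool" where
  "pp_definable A n R \<longleftrightarrow>
     (\<exists>\<phi>. wf_ppf A \<phi> \<and> fv \<phi> \<subseteq> {..<n} \<and>
          R = {xs. length xs = n \<and> set xs \<subseteq> univ A \<and> sat A \<phi> (\<lambda>i. xs ! i)})"

record ('a, 'b) interp =
  idim :: nat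
  idom :: "'a list set"
  imap :: "'a list \<Rightarrow> 'b"

text \<open>I is a pp-interpretation of B in A.  Tuples (a_1,...,a_k) of elements of
  D_I \<subseteq> A^d are passed to the formula as the flattened dk-tuple.\<close>

definition is_pp_interp :: "('a, 's) rstruct \<Rightarrow> ('b, 't) rstruct \<Rightarrow> ('a, 'b) interp \<Rightarrow> bool" where
  "is_pp_interp A B I \<longleftrightarrow>
     (let d = idim I; D = idom I; h = imap I in
       \<comment> \<open>domain formula \<delta>_I\<close>
       pp_definable A d D \<and>
       \<comment> \<open>surjective coordinate map\<close>
       h ` D = univ B \<and>
       \<comment> \<open>translation of each relational atom R(x_1,...,x_k)\<close>
       (\<forall>R \<in> sig B. \<exists>\<phi>. wf_ppf A \<phi> \<and> fv \<phi> \<subseteq> {..< d * ar B R} \<and>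
           (\<forall>as. length as = ar B R \<longrightarrow> set as \<subseteq> D \<longrightarrow>
              (map h as \<in> rel B R \<longleftrightarrow> sat A \<phi> (\<lambda>i. concat as ! i)))) \<and>
       \<comment> \<open>translation of the equality atom x_1 = x_2\<close>
       (\<exists>\<phi>. wf_ppf A \<phi> \<and> fv \<phi> \<subseteq> {..< 2 * d} \<and>
           (\<forall>a \<in> D. \<forall>b \<in> D. h a = h b \<longleftrightarrow> sat A \<phi> (\<lambda>i. (a @ b) ! i))))"

definition blocks :: "nat \<Rightarrow> nat \<Rightarrow> 'a list \<Rightarrow> 'a list list" where
  "blocks n d xs = map (\<lambda>i. take d (drop (i * d) xs)) [0..<n]"

text \<open>Composition I1 \<circ> I2 (I1 interprets C1 in C2, I2 interprets C2 in C3):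
  its domain is the domain of the translated formula \<delta>_{I1}, i.e. the d1*d2-tuples
  whose blocks lie in D_{I2} and whose image under h_{I2} lies in D_{I1}.\<close>

definition interp_comp :: "('b, 'c) interp \<Rightarrow> ('a, 'b) interp \<Rightarrow> ('a, 'c) interp" where
  "interp_comp I1 I2 =
     \<lparr> idim = idim I1 * idim I2,
       idom = {xs. length xs = idim I1 * idim I2 \<and>
                   (\<forall>c \<in> set (blocks (idim I1) (idim I2) xs). c \<in> idom I2) \<and>
                   map (imap I2) (blocks (idim I1) (idim I2) xs) \<in> idom I1},
       imap = (\<lambda>xs. imap I1 (map (imap I2) (blocks (idim I1) (idim I2) xs))) \<rparr>"

definition homotopic :: "('a, 's) rstruct \<Rightarrow> ('a, 'b) interp \<Rightarrow> ('a, 'b) interp \<Rightarrow> bool" where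
  "homotopic A I1 I2 \<longleftrightarrow>
     pp_definable A (idim I1 + idim I2)
       {x @ y | x y. x \<in> idom I1 \<and> y \<in> idom I2 \<and> imap I1 x = imap I2 y}"

definition id_interp :: "('a, 's) rstruct \<Rightarrow> ('a, 'a) interp" where
  "id_interp C = \<lparr> idim = 1, idom = {[a] | a. a \<in> univ C}, imap = hd \<rparr>"

definition pp_biinterpretable :: "('a, 's) rstruct \<Rightarrow> ('b, 't) rstruct \<Rightarrow> bool" where
  "pp_biinterpretable A B \<longleftrightarrow>
     (\<exists>I J. is_pp_interp A B I \<and> is_pp_interp B A J \<and>
            homotopic B (interp_comp I J) (id_interp B) \<and>
            homotopic A (interp_comp J I) (id_interp A))"

end

theory Submission
  imports Defs
begin

fun conjs :: "'s ppf list \<Rightarrow> 's ppf" where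
  "conjs [] = PTop"
| "conjs (p # ps) = PConj p (conjs ps)"

lemma sat_conjs: "sat A (conjs ps) v \<longleftrightarrow> (\<forall>p\<in>set ps. sat A p v)"
  by (induction ps) auto
lemma wf_conjs: "wf_ppf A (conjs ps) \<longleftrightarrow> (\<forall>p\<in>set ps. wf_ppf A p)"
  by (induction ps) auto
lemma fv_conjs: "fv (conjs ps) = (\<Union>p\<in>set ps. fv p)"
  by (induction ps) auto

definition UB :: "('a, 's) rstruct \<Rightarrow> nat \<Rightarrow> 'a list set" where
  "UB C n = {xs. length xs = n \<and> set xs \<subseteq> univ C}"

definition BS :: "('a, 's) rstruct \<Rightarrow> nat \<Rightarrow> ('a list, 's + nat) rstruct" where
  "BS C n = \<lparr>univ = UB C n, sig = Inl ` sig C \<union> Inr ` {..<n*n},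
     ar = (\<lambda>x. case x of Inl s \<Rightarrow> 1 | Inr k \<Rightarrow> 2),
     rel = (\<lambda>x. case x of Inl s \<Rightarrow> {[t] | t. t \<in> UB C n \<and> take (ar C s) t \<in> rel C s}
                        | Inr k \<Rightarrow> {[a,b] | a b. a \<in> UB C n \<and> b \<in> UB C n \<and> a ! (k div n) = b ! (k mod n)})\<rparr>"

definition II :: "('a, 's) rstruct \<Rightarrow> nat \<Rightarrow> ('a list, 'a) interp" where
  "II C n = \<lparr>idim = 1, idom = {[t] | t. t \<in> UB C n}, imap = (\<lambda>l. hd (hd l))\<rparr>"

definition JJ :: "('a, 's) rstruct \<Rightarrow> nat \<Rightarrow> ('a, 'a list) interp" where
  "JJ C n = \<lparr>idim = n, idom = UB C n, imap = id\<rparr>"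

lemma concat_single: "\<forall>x\<in>set as. \<exists>t. x = [t] \<Longrightarrow> concat as = map hd as"
  by (induction as) auto

lemma wf_BS: "wf_struct (BS C n)"
  unfolding wf_struct_def BS_def by (auto simp: UB_def; blast)

lemma ab_BS: "arity_bounded 2 (BS C n)"
  unfolding arity_bounded_def BS_def by auto

lemma fin_BS: "finite (sig C) \<Longrightarrow> finite (sig (BS C n))"
  unfolding BS_def by auto

lemma I_rel:
  assumes "wf_struct C" "arity_bounded m C" "n = Suc m" "R \<in> sig C"
  shows "\<exists>\<phi>. wf_ppf (BS C n) \<phi> \<and> fv \<phi> \<subseteq> {..< 1 * ar C R} \<and>
           (\<forall>as. length as = ar C R \<longrightarrow> set as \<subseteq> {[t] | t. t \<in> UB C n} \<longrightarrow>
              (map (\<lambda>l. hd (hd l)) as \<in> rel C R \<longleftrightarrow> sat (BS C n) \<phi> (\<lambda>i. concat as ! i)))"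
proof (cases "ar C R = 0")
  case True
  show ?thesis
  proof (cases "[] \<in> rel C R")
    case True
    then show ?thesis using \<open>ar C R = 0\<close> by (intro exI[of _ PTop]) auto
  next
    case False
    then show ?thesis using \<open>ar C R = 0\<close> by (intro exI[of _ PBot]) auto
  qed
next
  case False
  define k where "k = ar C R"
  have kn: "k < n" using assms unfolding arity_bounded_def k_def by auto
  define \<phi> where "\<phi> = PEx k (PConj (PRel (Inl R) [k]) (conjs (map (\<lambda>i. PRel (Inr i) [i,k]) [0..<k])))"
  have nn: "k < n * n" using assms(3) kn by (metis le_square order_less_le_trans)
  have wf: "wf_ppf (BS C n) \<phi>" using nn assms(4)
    unfolding \<phi>_def by (auto simp: wf_conjs BS_def image_iff dest: less_trans)
  have fvp: "fv \<phi> \<subseteq> {..< 1 * ar C R}" unfolding \<phi>_def k_def by (auto simp: fv_conjs)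
  have main: "map (\<lambda>l. hd (hd l)) as \<in> rel C R \<longleftrightarrow> sat (BS C n) \<phi> (\<lambda>i. concat as ! i)"
    if len: "length as = k" and sub: "set as \<subseteq> {[t] | t. t \<in> UB C n}" for as
  proof -
    have ca: "concat as = map hd as" using sub by (intro concat_single) blast
    define ts where "ts = map hd as"
    have tsU: "\<forall>t\<in>set ts. t \<in> UB C n" using sub unfolding ts_def by auto
    have lts: "length ts = k" using len ts_def by simp
    have mh: "map (\<lambda>l. hd (hd l)) as = map hd ts" unfolding ts_def by simp
    have sat_iff: "sat (BS C n) \<phi> (\<lambda>i. concat as ! i) \<longleftrightarrow>
       (\<exists>z \<in> UB C n. take k z \<in> rel C R \<and> (\<forall>i<k. (ts ! i) ! 0 = z ! i))"
      unfolding \<phi>_def ca ts_def[symmetric] using kn tsU lts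
      by (auto simp: sat_conjs BS_def k_def)
    have hd0: "\<forall>i<k. hd (ts ! i) = ts ! i ! 0"
      using tsU lts assms(3) by (auto simp: UB_def) (metis hd_conv_nth list.size(3) nat.distinct(1) nth_mem)
    show ?thesis
    proof
      assume A: "map (\<lambda>l. hd (hd l)) as \<in> rel C R"
      define w where "w = map hd ts"
      have lw: "length w = k" using lts w_def by simp
      have kpos: "k > 0" using False k_def by simp
      have wU: "set w \<subseteq> univ C"
      proof
        fix x assume "x \<in> set w"
        then obtain t where t: "t \<in> set ts" "x = hd t" unfolding w_def by auto
        then have "t \<in> UB C n" using tsU by auto
        then show "x \<in> univ C" using t assms(3) unfolding UB_def
          by (metis (mono_tags, lifting) hd_in_set list.size(3) mem_Collect_eq nat.distinct(1) subsetD)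
      qed
      define z where "z = w @ replicate (n - k) (hd w)"
      have zU: "z \<in> UB C n" unfolding z_def UB_def using lw kn wU kpos
        by (auto simp: hd_in_set)
      have tk: "take k z = w" unfolding z_def using lw by simp
      have zi: "\<forall>i<k. ts ! i ! 0 = z ! i" unfolding z_def using lw hd0 lts
        by (auto simp: nth_append w_def)
      show "sat (BS C n) \<phi> (\<lambda>i. concat as ! i)" unfolding sat_iff
        using zU tk zi A mh w_def by metis
    next
      assume "sat (BS C n) \<phi> (\<lambda>i. concat as ! i)"
      then obtain z where z: "z \<in> UB C n" "take k z \<in> rel C R" "\<forall>i<k. ts ! i ! 0 = z ! i"
        unfolding sat_iff by blast
      have "take k z = map hd ts"
      proof (rule nth_equalityI)
        show "length (take k z) = length (map hd ts)" using z(1) kn lts by (auto simp: UB_def)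
        fix i assume "i < length (take k z)"
        then have "i < k" by simp
        then show "take k z ! i = map hd ts ! i" using z(3) hd0 lts by auto
      qed
      then show "map (\<lambda>l. hd (hd l)) as \<in> rel C R" using z(2) mh by simp
    qed
  qed
  show ?thesis using wf fvp main unfolding k_def by blast
qed

lemma I_interp:
  assumes "wf_struct C" "arity_bounded m C" "n = Suc m"
  shows "is_pp_interp (BS C n) C (II C n)"
  unfolding is_pp_interp_def Let_def
proof (intro conjI ballI)
  show "pp_definable (BS C n) (idim (II C n)) (idom (II C n))"
    unfolding pp_definable_def II_def
    by (intro exI[of _ PTop]) (auto simp: BS_def length_Suc_conv)
  show "imap (II C n) ` idom (II C n) = univ C"
  proof
    show "imap (II C n) ` idom (II C n) \<subseteq> univ C"
      using assms(3) by (auto simp: II_def UB_def) (metis hd_in_set list.size(3) nat.distinct(1) subsetD)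
    show "univ C \<subseteq> imap (II C n) ` idom (II C n)"
    proof
      fix c assume "c \<in> univ C"
      then have "replicate n c \<in> UB C n" by (auto simp: UB_def)
      moreover have "hd (replicate n c) = c" using assms(3) by simp
      ultimately show "c \<in> imap (II C n) ` idom (II C n)" unfolding II_def
        by (auto intro!: image_eqI[of _ _ "[replicate n c]"])
    qed
  qed
  fix R assume "R \<in> sig C"
  then show "\<exists>\<phi>. wf_ppf (BS C n) \<phi> \<and> fv \<phi> \<subseteq> {..<idim (II C n) * ar C R} \<and>
           (\<forall>as. length as = ar C R \<longrightarrow> set as \<subseteq> idom (II C n) \<longrightarrow>
              (map (imap (II C n)) as \<in> rel C R) = sat (BS C n) \<phi> (\<lambda>i. concat as ! i))"
    using I_rel[OF assms] by (simp add: II_def)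
next
  have n0: "0 < n * n" using assms(3) by simp
  show "\<exists>\<phi>. wf_ppf (BS C n) \<phi> \<and> fv \<phi> \<subseteq> {..<2 * idim (II C n)} \<and>
           (\<forall>a\<in>idom (II C n). \<forall>b\<in>idom (II C n).
              (imap (II C n) a = imap (II C n) b) = sat (BS C n) \<phi> (\<lambda>i. (a @ b) ! i))"
  proof (intro exI[of _ "PRel (Inr 0) [0,1]"] conjI ballI)
    show "wf_ppf (BS C n) (PRel (Inr 0) [0, 1])" using n0 by (simp add: BS_def)
    show "fv (PRel (Inr 0) [0, 1]) \<subseteq> {..<2 * idim (II C n)}" by (auto simp: II_def)
    fix a b assume "a \<in> idom (II C n)" "b \<in> idom (II C n)"
    then obtain t s where ts: "a = [t]" "b = [s]" "t \<in> UB C n" "s \<in> UB C n" by (auto simp: II_def)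
    have ne: "t \<noteq> []" "s \<noteq> []" using ts assms(3) by (auto simp: UB_def)
    then have "hd t = t ! 0" "hd s = s ! 0" by (simp_all add: hd_conv_nth)
    then show "(imap (II C n) a = imap (II C n) b) = sat (BS C n) (PRel (Inr 0) [0, 1]) (\<lambda>i. (a @ b) ! i)"
      using ts by (simp add: II_def BS_def)
  qed
qed

lemma map_nth_take: "k \<le> length t \<Longrightarrow> map (\<lambda>i. t ! i) [0..<k] = take k t"
  by (rule nth_equalityI) auto

lemma J_interp:
  assumes "wf_struct C" "arity_bounded m C" "n = Suc m"
  shows "is_pp_interp C (BS C n) (JJ C n)"
  unfolding is_pp_interp_def Let_def
proof (intro conjI ballI)
  show "pp_definable C (idim (JJ C n)) (idom (JJ C n))"
    unfolding pp_definable_def JJ_def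
    by (intro exI[of _ PTop]) (auto simp: UB_def)
  show "imap (JJ C n) ` idom (JJ C n) = univ (BS C n)"
    by (simp add: JJ_def BS_def)
  fix R assume R: "R \<in> sig (BS C n)"
  show "\<exists>\<phi>. wf_ppf C \<phi> \<and> fv \<phi> \<subseteq> {..<idim (JJ C n) * ar (BS C n) R} \<and>
           (\<forall>as. length as = ar (BS C n) R \<longrightarrow> set as \<subseteq> idom (JJ C n) \<longrightarrow>
              (map (imap (JJ C n)) as \<in> rel (BS C n) R) = sat C \<phi> (\<lambda>i. concat as ! i))"
  proof (cases R)
    case (Inl s)
    then have s: "s \<in> sig C" using R by (auto simp: BS_def)
    then have kn: "ar C s \<le> n" using assms(2,3) by (auto simp: arity_bounded_def)
    show ?thesis
    proof (intro exI[of _ "PRel s [0..<ar C s]"] conjI allI impI)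
      show "wf_ppf C (PRel s [0..<ar C s])" using s by simp
      show "fv (PRel s [0..<ar C s]) \<subseteq> {..<idim (JJ C n) * ar (BS C n) R}"
        using kn Inl by (auto simp: JJ_def BS_def)
      fix as :: "'a list list" assume "length as = ar (BS C n) R" "set as \<subseteq> idom (JJ C n)"
      then obtain t where t: "as = [t]" "t \<in> UB C n" using Inl
        by (auto simp: BS_def JJ_def length_Suc_conv)
      then have lt: "length t = n" by (simp add: UB_def)
      show "(map (imap (JJ C n)) as \<in> rel (BS C n) R) = sat C (PRel s [0..<ar C s]) (\<lambda>i. concat as ! i)"
        using t Inl kn lt by (simp add: JJ_def BS_def map_nth_take)
    qed
  next
    case (Inr k)
    then have k: "k < n * n" using R by (auto simp: BS_def)
    have kd: "k div n < n" using k by (simp add: less_mult_imp_div_less)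
    have km: "k mod n < n" using assms(3) by simp
    show ?thesis
    proof (intro exI[of _ "PEq (k div n) (n + k mod n)"] conjI allI impI)
      show "wf_ppf C (PEq (k div n) (n + k mod n))" by simp
      show "fv (PEq (k div n) (n + k mod n)) \<subseteq> {..<idim (JJ C n) * ar (BS C n) R}"
        using kd km Inr by (auto simp: JJ_def BS_def)
      fix as :: "'a list list" assume "length as = ar (BS C n) R" "set as \<subseteq> idom (JJ C n)"
      then obtain a b where ab: "as = [a, b]" "a \<in> UB C n" "b \<in> UB C n" using Inr
        by (auto simp: BS_def JJ_def length_Suc_conv numeral_2_eq_2)
      then have la: "length a = n" by (simp add: UB_def)
      show "(map (imap (JJ C n)) as \<in> rel (BS C n) R) = sat C (PEq (k div n) (n + k mod n)) (\<lambda>i. concat as ! i)"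
        using ab Inr kd km la by (simp add: JJ_def BS_def nth_append)
    qed
  qed
next
  show "\<exists>\<phi>. wf_ppf C \<phi> \<and> fv \<phi> \<subseteq> {..<2 * idim (JJ C n)} \<and>
           (\<forall>a\<in>idom (JJ C n). \<forall>b\<in>idom (JJ C n).
              (imap (JJ C n) a = imap (JJ C n) b) = sat C \<phi> (\<lambda>i. (a @ b) ! i))"
  proof (intro exI[of _ "conjs (map (\<lambda>i. PEq i (n + i)) [0..<n])"] conjI ballI)
    show "wf_ppf C (conjs (map (\<lambda>i. PEq i (n + i)) [0..<n]))" by (simp add: wf_conjs)
    show "fv (conjs (map (\<lambda>i. PEq i (n + i)) [0..<n])) \<subseteq> {..<2 * idim (JJ C n)}"
      by (auto simp: fv_conjs JJ_def)
    fix a b assume "a \<in> idom (JJ C n)" "b \<in> idom (JJ C n)"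
    then have l: "length a = n" "length b = n" by (auto simp: JJ_def UB_def)
    show "(imap (JJ C n) a = imap (JJ C n) b) = sat C (conjs (map (\<lambda>i. PEq i (n + i)) [0..<n])) (\<lambda>i. (a @ b) ! i)"
      using l by (auto simp: JJ_def sat_conjs nth_append intro: nth_equalityI)
  qed
qed

lemma blocks1: "length xs = n \<Longrightarrow> blocks 1 n xs = [xs]"
  by (simp add: blocks_def)

lemma hom1:
  assumes "n = Suc m"
  shows "homotopic C (interp_comp (II C n) (JJ C n)) (id_interp C)"
proof -
  have dom: "idom (interp_comp (II C n) (JJ C n)) = UB C n"
    by (auto simp: interp_comp_def II_def JJ_def blocks_def UB_def)
  have mp: "\<And>xs. xs \<in> UB C n \<Longrightarrow> imap (interp_comp (II C n) (JJ C n)) xs = hd xs"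
    by (auto simp: interp_comp_def II_def JJ_def blocks_def UB_def)
  have S: "{x @ y | x y. x \<in> idom (interp_comp (II C n) (JJ C n)) \<and> y \<in> idom (id_interp C) \<and>
             imap (interp_comp (II C n) (JJ C n)) x = imap (id_interp C) y}
         = {xs. length xs = n + 1 \<and> set xs \<subseteq> univ C \<and> sat C (PEq 0 n) (\<lambda>i. xs ! i)}"
  proof (intro set_eqI iffI)
    fix z assume "z \<in> {x @ y | x y. x \<in> idom (interp_comp (II C n) (JJ C n)) \<and> y \<in> idom (id_interp C) \<and>
             imap (interp_comp (II C n) (JJ C n)) x = imap (id_interp C) y}"
    then obtain x a where z: "z = x @ [a]" "x \<in> UB C n" "a \<in> univ C" "hd x = a"
      using dom mp by (auto simp: id_interp_def)
    then have "length x = n" "x \<noteq> []" using assms by (auto simp: UB_def)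
    then show "z \<in> {xs. length xs = n + 1 \<and> set xs \<subseteq> univ C \<and> sat C (PEq 0 n) (\<lambda>i. xs ! i)}"
      using z by (auto simp: UB_def nth_append hd_conv_nth)
  next
    fix z assume "z \<in> {xs. length xs = n + 1 \<and> set xs \<subseteq> univ C \<and> sat C (PEq 0 n) (\<lambda>i. xs ! i)}"
    then have z: "length z = n + 1" "set z \<subseteq> univ C" "z ! 0 = z ! n" by auto
    define x where "x = take n z"
    have "drop n z = [z ! n]" using z(1) Cons_nth_drop_Suc[of n z] by simp
    then have zx: "z = x @ [z ! n]" unfolding x_def by (metis append_take_drop_id)
    have xU: "x \<in> UB C n" using z unfolding x_def UB_def by (auto dest: in_set_takeD)
    have "z \<noteq> []" using z(1) by auto
    then have "hd x = z ! n" using z assms unfolding x_def by (simp add: hd_conv_nth)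
    show "z \<in> {x @ y | x y. x \<in> idom (interp_comp (II C n) (JJ C n)) \<and> y \<in> idom (id_interp C) \<and>
             imap (interp_comp (II C n) (JJ C n)) x = imap (id_interp C) y}"
    proof -
      have "z ! n \<in> univ C" using z(1,2) by auto
      then have "[z ! n] \<in> idom (id_interp C)" by (simp add: id_interp_def)
      moreover have "x \<in> idom (interp_comp (II C n) (JJ C n))" using dom xU by simp
      moreover have "imap (interp_comp (II C n) (JJ C n)) x = imap (id_interp C) [z ! n]"
        using mp[OF xU] \<open>hd x = z ! n\<close> by (simp add: id_interp_def)
      ultimately show ?thesis using zx by blast
    qed
  qed
  show ?thesis unfolding homotopic_def pp_definable_def
    apply (subst S)
    apply (rule exI[of _ "PEq 0 n"])
    by (auto simp: interp_comp_def II_def JJ_def id_interp_def)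
qed

lemma blocksn1: "length xs = n \<Longrightarrow> blocks n (Suc 0) xs = map (\<lambda>x. [x]) xs"
  unfolding blocks_def
  by (rule nth_equalityI) (auto simp: take_Suc_conv_app_nth)

lemma hom2:
  fixes C :: "('a, 's) rstruct"
  assumes "n = Suc m"
  shows "homotopic (BS C n) (interp_comp (JJ C n) (II C n)) (id_interp (BS C n))"
proof -
  let ?K = "interp_comp (JJ C n) (II C n)"
  have hdU: "hd t \<in> univ C" if "t \<in> UB C n" for t
    using that assms by (auto simp: UB_def) (metis hd_in_set list.size(3) nat.distinct(1) subsetD)
  have dom: "idom ?K = {xs. length xs = n \<and> set xs \<subseteq> UB C n}"
  proof (intro set_eqI iffI)
    fix xs assume "xs \<in> idom ?K"
    then show "xs \<in> {xs. length xs = n \<and> set xs \<subseteq> UB C n}"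
      by (auto simp: interp_comp_def II_def JJ_def blocksn1)
  next
    fix xs assume a: "xs \<in> {xs. length xs = n \<and> set xs \<subseteq> UB C n}"
    then have "map hd xs \<in> UB C n" using hdU by (auto simp: UB_def)
    then show "xs \<in> idom ?K" using a
      by (auto simp: interp_comp_def II_def JJ_def blocksn1 comp_def)
  qed
  have mp: "\<And>xs. length xs = n \<Longrightarrow> imap ?K xs = map hd xs"
    by (auto simp: interp_comp_def II_def JJ_def blocksn1 comp_def)
  define \<phi> :: "('s + nat) ppf" where "\<phi> = conjs (map (\<lambda>i. PRel (Inr i) [i, n]) [0..<n])"
  have wf: "wf_ppf (BS C n) \<phi>" unfolding \<phi>_def using assms
    by (auto simp: wf_conjs BS_def image_iff intro: less_le_trans)
  have fvp: "fv \<phi> \<subseteq> {..<n + 1}" unfolding \<phi>_def by (auto simp: fv_conjs)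
  have satp: "sat (BS C n) \<phi> (\<lambda>i. xs ! i) \<longleftrightarrow>
     (\<forall>i<n. xs ! i \<in> UB C n \<and> xs ! n \<in> UB C n \<and> xs ! i ! 0 = xs ! n ! i)" for xs
    unfolding \<phi>_def by (auto simp: sat_conjs BS_def)
  have S: "{x @ y | x y. x \<in> idom ?K \<and> y \<in> idom (id_interp (BS C n)) \<and>
             imap ?K x = imap (id_interp (BS C n)) y}
         = {xs. length xs = n + 1 \<and> set xs \<subseteq> univ (BS C n) \<and> sat (BS C n) \<phi> (\<lambda>i. xs ! i)}"
  proof (intro set_eqI iffI)
    fix z assume "z \<in> {x @ y | x y. x \<in> idom ?K \<and> y \<in> idom (id_interp (BS C n)) \<and>
             imap ?K x = imap (id_interp (BS C n)) y}"
    then obtain x b where z: "z = x @ [b]" "length x = n" "set x \<subseteq> UB C n" "b \<in> UB C n" "map hd x = b"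
      using dom mp by (auto simp: id_interp_def BS_def)
    have "\<forall>i<n. x ! i ! 0 = b ! i"
    proof (intro allI impI)
      fix i assume i: "i < n"
      then have "x ! i \<in> UB C n" using z by auto
      then have "x ! i \<noteq> []" using assms by (auto simp: UB_def)
      moreover have "b ! i = hd (x ! i)" using z(2,5) i by auto
      ultimately show "x ! i ! 0 = b ! i" by (simp add: hd_conv_nth)
    qed
    then show "z \<in> {xs. length xs = n + 1 \<and> set xs \<subseteq> univ (BS C n) \<and> sat (BS C n) \<phi> (\<lambda>i. xs ! i)}"
      using z unfolding satp by (auto simp: BS_def nth_append)
  next
    fix z assume "z \<in> {xs. length xs = n + 1 \<and> set xs \<subseteq> univ (BS C n) \<and> sat (BS C n) \<phi> (\<lambda>i. xs ! i)}"
    then have z: "length z = n + 1" "set z \<subseteq> UB C n"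
       "\<forall>i<n. z ! i ! 0 = z ! n ! i" by (simp_all add: satp) (simp add: BS_def)
    define x where "x = take n z"
    have "drop n z = [z ! n]" using z(1) Cons_nth_drop_Suc[of n z] by simp
    then have zx: "z = x @ [z ! n]" unfolding x_def by (metis append_take_drop_id)
    have lx: "length x = n" using z(1) x_def by simp
    have xU: "set x \<subseteq> UB C n" using z unfolding x_def by (auto dest: in_set_takeD)
    have bU: "z ! n \<in> UB C n" using z by auto
    have "map hd x = z ! n"
    proof (rule nth_equalityI)
      show "length (map hd x) = length (z ! n)" using lx bU by (simp add: UB_def)
      fix i assume "i < length (map hd x)"
      then have i: "i < n" using lx by simp
      then have "x ! i \<in> UB C n" using xU lx by auto
      then have "x ! i \<noteq> []" using assms by (auto simp: UB_def)
      moreover have "x ! i = z ! i" using i unfolding x_def by simp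
      ultimately show "map hd x ! i = z ! n ! i" using i z(3) lx by (simp add: hd_conv_nth)
    qed
    moreover have "x \<in> idom ?K" using dom lx xU by simp
    moreover have "[z ! n] \<in> idom (id_interp (BS C n))" using bU by (simp add: id_interp_def BS_def)
    ultimately show "z \<in> {x @ y | x y. x \<in> idom ?K \<and> y \<in> idom (id_interp (BS C n)) \<and>
             imap ?K x = imap (id_interp (BS C n)) y}"
      using zx mp[OF lx] unfolding id_interp_def by (simp (no_asm_use)) (metis list.sel(1))
  qed
  show ?thesis unfolding homotopic_def pp_definable_def
    apply (subst S)
    apply (rule exI[of _ \<phi>])
    using wf fvp by (auto simp: interp_comp_def II_def JJ_def id_interp_def)
qed

theorem mainTheorem16:
  fixes C :: "('a, 's) rstruct" and m :: nat
  assumes "wf_struct C" and "arity_bounded m C"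
  shows "\<exists>B :: ('a list, 's + nat) rstruct.
           wf_struct B \<and> arity_bounded 2 B \<and> pp_biinterpretable B C \<and>
           (finite (sig C) \<longrightarrow> finite (sig B))"
proof (intro exI conjI impI)
  show "wf_struct (BS C (Suc m))" by (rule wf_BS)
  show "arity_bounded 2 (BS C (Suc m))" by (rule ab_BS)
  show "finite (sig C) \<Longrightarrow> finite (sig (BS C (Suc m)))" by (rule fin_BS)
  show "pp_biinterpretable (BS C (Suc m)) C"
    unfolding pp_biinterpretable_def
    using I_interp[OF assms refl] J_interp[OF assms refl] hom1[OF refl] hom2[OF refl] by blast
qed

end
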